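(* Let $G$ be an additive abelian group and let $S\subseteq G$ be a pointed reflection subspace of $G$. (i)(a) For every subset $T\subseteq S$, the set $S_T:=S\cap\langle T\rangle$ is a pointed reflection subspace of the group $\langle T\rangle$. In particular, if $G$ is torsion free and $T$ is finite, then $S_T$ is a semilattice in $\langle T\rangle$. (i)(b) Let $\mathcal M_S$ denote the set of all finite subsets of $S$, directed by inclusion. Then $S$ is the direct union of the family $\{S_T\}_{T\in\mathcal M_S}$. (ii) Let $\mathcal S$ be a family of subsets of $G$ which is a directed set under inclusion, such that each $S'\in\mathcal S$ is a pointed reflection subspace of its $\mathbb Z$-span $\langle S'\rangle$ in $G$. If $G=\bigcup_{S'\in\mathcal S}\langle S'\rangle$, then the direct union $\bigcup_{S'\in\mathcal S}S'$ is a pointed reflection subspace of $G$.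
   Context: For a subset $X$ of an abelian group, $\langle X\rangle$ denotes the subgroup generated by $X$. A symmetric reflection subspace of an abelian group $H$ is a subset $S\subseteq H$ with $\langle S\rangle=H$ and $S-2S\subseteq S$; it is a pointed reflection subspace if moreover $0\in S$. If $H$ is free abelian of finite rank, a pointed reflection subspace of $H$ is called a semilattice in $H$. A set $C$ is the direct union of a family $\{C_i\}_{i\in I}$ of subsets of $C$, directed under inclusion, if $C=\bigcup_{i\in I}C_i$. *)

theory Defs
  imports Main
begin

text \<open>Additive abelian group: a type of class ab_group_add; G is UNIV.\<close>

definition subgroup_add :: "'a::ab_group_add set \<Rightarrow> bool" where
  "subgroup_add H \<longleftrightarrow> 0 \<in> H \<and> (\<forall>x\<in>H. \<forall>y\<in>H. x - y \<in> H)"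

definition gen :: "'a::ab_group_add set \<Rightarrow> 'a set" where
  "gen X = \<Inter>{H. subgroup_add H \<and> X \<subseteq> H}"

definition nsmul :: "nat \<Rightarrow> 'a::ab_group_add \<Rightarrow> 'a" where
  "nsmul n x = (\<Sum>i<n. x)"

definition zsmul :: "int \<Rightarrow> 'a::ab_group_add \<Rightarrow> 'a" where
  "zsmul k x = (if k \<ge> 0 then nsmul (nat k) x else - nsmul (nat (- k)) x)"

definition torsion_free :: "'a::ab_group_add itself \<Rightarrow> bool" where
  "torsion_free _ \<longleftrightarrow> (\<forall>(x::'a) n. n > 0 \<and> nsmul n x = 0 \<longrightarrow> x = 0)"

definition free_abelian_finite_rank :: "'a::ab_group_add set \<Rightarrow> bool" where
  "free_abelian_finite_rank H \<longleftrightarrow>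
     (\<exists>B. finite B \<and> B \<subseteq> H \<and> gen B = H \<and>
        (\<forall>c::'a \<Rightarrow> int. (\<Sum>b\<in>B. zsmul (c b) b) = 0 \<longrightarrow> (\<forall>b\<in>B. c b = 0)))"

definition symmetric_reflection_subspace :: "'a::ab_group_add set \<Rightarrow> 'a set \<Rightarrow> bool" where
  "symmetric_reflection_subspace H S \<longleftrightarrow>
     S \<subseteq> H \<and> gen S = H \<and> (\<forall>x\<in>S. \<forall>y\<in>S. x - (y + y) \<in> S)"

definition pointed_reflection_subspace :: "'a::ab_group_add set \<Rightarrow> 'a set \<Rightarrow> bool" where
  "pointed_reflection_subspace H S \<longleftrightarrow> symmetric_reflection_subspace H S \<and> 0 \<in> S"

definition semilattice_in :: "'a::ab_group_add set \<Rightarrow> 'a set \<Rightarrow> bool" where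
  "semilattice_in H S \<longleftrightarrow> free_abelian_finite_rank H \<and> pointed_reflection_subspace H S"

definition directed_incl :: "'a set set \<Rightarrow> bool" where
  "directed_incl F \<longleftrightarrow> F \<noteq> {} \<and> (\<forall>A\<in>F. \<forall>B\<in>F. \<exists>C\<in>F. A \<union> B \<subseteq> C)"

definition direct_union :: "'a set \<Rightarrow> 'a set set \<Rightarrow> bool" where
  "direct_union C F \<longleftrightarrow> directed_incl F \<and> (\<forall>A\<in>F. A \<subseteq> C) \<and> C = \<Union>F"

end

theory Submission
  imports Defs
begin

lemma nsmul_0[simp]: "nsmul 0 x = 0" by (simp add: nsmul_def)
lemma nsmul_Suc: "nsmul (Suc n) x = x + nsmul n x" by (simp add: nsmul_def add.commute)
lemma nsmul_add: "nsmul (m+n) x = nsmul m x + nsmul n x"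
  by (induct m) (simp_all add: nsmul_Suc add.assoc)
lemma nsmul_add_arg: "nsmul n (x+y) = nsmul n x + nsmul n y"
  by (simp add: nsmul_def sum.distrib)
lemma nsmul_diff_arg: "nsmul n (x-y) = nsmul n x - nsmul n y"
  by (simp add: nsmul_def sum_subtractf)
lemma nsmul_mult: "nsmul (m*n) x = nsmul m (nsmul n x)"
  by (induct m) (simp_all add: nsmul_Suc nsmul_add)

lemma zsmul_diff_nat: "zsmul (int m - int n) x = nsmul m x - nsmul n x"
proof (cases "n \<le> m")
  case True
  then have e: "int m - int n = int (m - n)" by simp
  have "nsmul m x = nsmul (m-n) x + nsmul n x" using True nsmul_add[of "m-n" n x] by simp
  then have "nsmul (m-n) x = nsmul m x - nsmul n x" by (simp add: algebra_simps)
  then show ?thesis unfolding e zsmul_def by simp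
next
  case False
  then have e: "int m - int n = - int (n - m)" by simp
  have "nsmul n x = nsmul (n-m) x + nsmul m x" using False nsmul_add[of "n-m" m x] by simp
  then have "nsmul (n-m) x = nsmul n x - nsmul m x" by (simp add: algebra_simps)
  moreover have "\<not> (- int (n - m) \<ge> 0)" using False by simp
  moreover have "nat (- (- int (n - m))) = n - m" by simp
  ultimately show ?thesis unfolding e zsmul_def by (simp only: if_False) simp
qed

lemma zsmul_repr: "zsmul a x = nsmul (nat a) x - nsmul (nat (-a)) x"
proof -
  have "a = int (nat a) - int (nat (-a))" by simp
  then show ?thesis using zsmul_diff_nat by metis
qed

lemma zsmul_add: "zsmul (a+b) x = zsmul a x + zsmul b x"
proof -
  have "a + b = int (nat a + nat b) - int (nat (-a) + nat (-b))" by simp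
  then have "zsmul (a+b) x = nsmul (nat a + nat b) x - nsmul (nat (-a) + nat (-b)) x"
    using zsmul_diff_nat by metis
  then show ?thesis by (simp add: nsmul_add zsmul_repr[of a] zsmul_repr[of b])
qed

lemma zsmul_uminus: "zsmul (-a) x = - zsmul a x"
  by (simp add: zsmul_repr)

lemma zsmul_diff: "zsmul (a-b) x = zsmul a x - zsmul b x"
  using zsmul_add[of a "-b" x] by (simp add: zsmul_uminus)

lemma zsmul_add_arg: "zsmul a (x+y) = zsmul a x + zsmul a y"
  by (simp add: zsmul_repr nsmul_add_arg)

lemma zsmul_zero[simp]: "zsmul 0 x = 0" by (simp add: zsmul_def)

lemma zsmul_mult: "zsmul (a*b) x = zsmul a (zsmul b x)"
proof -
  define pa na pb nb where "pa = nat a" "na = nat (-a)" "pb = nat b" "nb = nat (-b)"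
  have "a*b = int (pa*pb + na*nb) - int (pa*nb + na*pb)"
    unfolding pa_na_pb_nb_def by (cases "a \<ge> 0"; cases "b \<ge> 0") (simp_all add: algebra_simps)
  then have "zsmul (a*b) x = nsmul (pa*pb + na*nb) x - nsmul (pa*nb + na*pb) x"
    using zsmul_diff_nat by metis
  also have "\<dots> = nsmul (pa*pb) x + nsmul (na*nb) x - nsmul (pa*nb) x - nsmul (na*pb) x"
    by (simp add: nsmul_add)
  also have "\<dots> = nsmul pa (nsmul pb x - nsmul nb x) - nsmul na (nsmul pb x - nsmul nb x)"
    by (simp add: nsmul_diff_arg mult.commute flip: nsmul_mult)
  also have "\<dots> = zsmul a (zsmul b x)"
    unfolding pa_na_pb_nb_def by (simp add: zsmul_repr[of a] zsmul_repr[of b])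
  finally show ?thesis .
qed

lemma zsmul_torsion:
  assumes "torsion_free TYPE('a::ab_group_add)" "zsmul c (x::'a) = 0" "c \<noteq> 0"
  shows "x = 0"
proof (cases "c > 0")
  case True
  then have "nsmul (nat c) x = 0" using assms(2) by (simp add: zsmul_def)
  moreover have "nat c > 0" using True by simp
  ultimately show ?thesis using assms(1) unfolding torsion_free_def by blast
next
  case False
  then have "nsmul (nat (-c)) x = 0" using assms(2,3) by (simp add: zsmul_def)
  moreover have "nat (-c) > 0" using False assms(3) by simp
  ultimately show ?thesis using assms(1) unfolding torsion_free_def by blast
qed

lemma sub_minus: "subgroup_add H \<Longrightarrow> x \<in> H \<Longrightarrow> -x \<in> H"
  unfolding subgroup_add_def by (metis diff_0)
lemma sub_add: "subgroup_add H \<Longrightarrow> x \<in> H \<Longrightarrow> y \<in> H \<Longrightarrow> x + y \<in> H"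
  using sub_minus unfolding subgroup_add_def by (metis diff_minus_eq_add)
lemma sub_diff: "subgroup_add H \<Longrightarrow> x \<in> H \<Longrightarrow> y \<in> H \<Longrightarrow> x - y \<in> H"
  unfolding subgroup_add_def by blast
lemma sub_nsmul: "subgroup_add H \<Longrightarrow> x \<in> H \<Longrightarrow> nsmul n x \<in> H"
  by (induct n) (auto simp: nsmul_Suc sub_add subgroup_add_def)
lemma sub_zsmul: "subgroup_add H \<Longrightarrow> x \<in> H \<Longrightarrow> zsmul k x \<in> H"
  by (simp add: zsmul_repr sub_diff sub_nsmul)

lemma gen_subgroup: "subgroup_add (gen X)"
  unfolding gen_def subgroup_add_def by auto
lemma gen_sub: "X \<subseteq> gen X" unfolding gen_def by auto
lemma gen_least: "subgroup_add H \<Longrightarrow> X \<subseteq> H \<Longrightarrow> gen X \<subseteq> H"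
  unfolding gen_def by auto
lemma gen_mono: "X \<subseteq> Y \<Longrightarrow> gen X \<subseteq> gen Y"
  using gen_least gen_subgroup gen_sub by (metis order_trans)
lemma gen_eqI: "X \<subseteq> gen Y \<Longrightarrow> Y \<subseteq> gen X \<Longrightarrow> gen X = gen Y"
  using gen_least gen_subgroup by (metis subset_antisym)

definition indep :: "'a::ab_group_add set \<Rightarrow> bool" where
  "indep B \<longleftrightarrow> (\<forall>c::'a \<Rightarrow> int. (\<Sum>b\<in>B. zsmul (c b) b) = 0 \<longrightarrow> (\<forall>b\<in>B. c b = 0))"

lemma step_sum:
  fixes T :: "'a::ab_group_add set"
  assumes fin: "finite T" and a: "a \<in> T" and b: "b \<in> T" and ab: "a \<noteq> b"
    and b': "b' \<notin> T" and bdef: "b' = b + zsmul e a"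
    and rel: "(\<Sum>t\<in>T. zsmul (c t) t) = 0"
  shows "(\<Sum>t\<in>insert b' (T-{b}). zsmul (((c(a := c a - e * c b))(b' := c b)) t) t) = 0"
    and "(\<Sum>t\<in>insert b' (T-{b}). nat \<bar>((c(a := c a - e * c b))(b' := c b)) t\<bar>)
         = nat \<bar>c b\<bar> + nat \<bar>c a - e * c b\<bar> + (\<Sum>t\<in>T-{a,b}. nat \<bar>c t\<bar>)"
proof -
  define c'' where "c'' = (c(a := c a - e * c b))(b' := c b)"
  have ab': "a \<noteq> b'" using a b' by auto
  have R: "\<And>f. (\<Sum>t\<in>T-{a,b}. f (c'' t) t) = (\<Sum>t\<in>T-{a,b}. f (c t) t)"
    by (rule sum.cong) (use b' in \<open>auto simp: c''_def\<close>)
  have split1: "\<And>g. (\<Sum>t\<in>T. g t) = g a + g b + (\<Sum>t\<in>T-{a,b}. g t)"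
  proof -
    fix g :: "'a \<Rightarrow> 'b::comm_monoid_add"
    have "(\<Sum>t\<in>T. g t) = g a + (\<Sum>t\<in>T-{a}. g t)" using fin a by (simp add: sum.remove)
    also have "(\<Sum>t\<in>T-{a}. g t) = g b + (\<Sum>t\<in>T-{a}-{b}. g t)" using fin b ab by (simp add: sum.remove)
    finally show "(\<Sum>t\<in>T. g t) = g a + g b + (\<Sum>t\<in>T-{a,b}. g t)"
      by (simp add: add.assoc set_diff_eq)
  qed
  have split2: "\<And>g. (\<Sum>t\<in>insert b' (T-{b}). g t) = g b' + g a + (\<Sum>t\<in>T-{a,b}. g t)"
  proof -
    fix g :: "'a \<Rightarrow> 'b::comm_monoid_add"
    have "(\<Sum>t\<in>insert b' (T-{b}). g t) = g b' + (\<Sum>t\<in>T-{b}. g t)" using fin b' by simp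
    also have "(\<Sum>t\<in>T-{b}. g t) = g a + (\<Sum>t\<in>T-{b}-{a}. g t)" using fin a ab by (simp add: sum.remove)
    finally show "(\<Sum>t\<in>insert b' (T-{b}). g t) = g b' + g a + (\<Sum>t\<in>T-{a,b}. g t)"
      by (simp add: add.assoc) (metis Diff_insert insert_commute)
  qed
  have "(\<Sum>t\<in>insert b' (T-{b}). zsmul (c'' t) t)
      = zsmul (c b) b' + zsmul (c a - e * c b) a + (\<Sum>t\<in>T-{a,b}. zsmul (c t) t)"
    using split2[of "\<lambda>t. zsmul (c'' t) t"] R[of "\<lambda>k t. zsmul k t"] ab' by (simp add: c''_def)
  also have "zsmul (c b) b' + zsmul (c a - e * c b) a = zsmul (c a) a + zsmul (c b) b"
    unfolding bdef by (simp add: zsmul_add_arg zsmul_diff zsmul_mult[symmetric] mult.commute)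
  also have "zsmul (c a) a + zsmul (c b) b + (\<Sum>t\<in>T-{a,b}. zsmul (c t) t) = 0"
    using rel split1[of "\<lambda>t. zsmul (c t) t"] by simp
  finally show "(\<Sum>t\<in>insert b' (T-{b}). zsmul (((c(a := c a - e * c b))(b' := c b)) t) t) = 0"
    by (simp add: c''_def)
  show "(\<Sum>t\<in>insert b' (T-{b}). nat \<bar>((c(a := c a - e * c b))(b' := c b)) t\<bar>)
         = nat \<bar>c b\<bar> + nat \<bar>c a - e * c b\<bar> + (\<Sum>t\<in>T-{a,b}. nat \<bar>c t\<bar>)"
    using split2[of "\<lambda>t. nat \<bar>c'' t\<bar>"] R[of "\<lambda>k t. nat \<bar>k\<bar>"] ab' by (simp add: c''_def)
qed


lemma sum_split2:
  assumes "finite T" "a \<in> T" "b \<in> T" "a \<noteq> b"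
  shows "(\<Sum>t\<in>T. g t) = g a + g b + (\<Sum>t\<in>T-{a,b}. (g t :: 'b::comm_monoid_add))"
proof -
  have "(\<Sum>t\<in>T. g t) = g a + (\<Sum>t\<in>T-{a}. g t)" using assms by (simp add: sum.remove)
  also have "(\<Sum>t\<in>T-{a}. g t) = g b + (\<Sum>t\<in>T-{a}-{b}. g t)" using assms by (simp add: sum.remove)
  finally show ?thesis by (simp add: add.assoc set_diff_eq)
qed

lemma gen_remove:
  assumes "x \<in> T" "x \<in> gen (T - {x})"
  shows "gen (T - {x}) = gen T"
proof (rule gen_eqI)
  show "T - {x} \<subseteq> gen T" using gen_sub[of T] by blast
  show "T \<subseteq> gen (T - {x})"
  proof
    fix t assume "t \<in> T"
    then show "t \<in> gen (T - {x})" using assms(2) gen_sub[of "T - {x}"] by (cases "t = x") auto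
  qed
qed

lemma reduce:
  fixes T :: "'a::ab_group_add set"
  assumes tf: "torsion_free TYPE('a)"
    and IH: "\<And>T'. finite T' \<Longrightarrow> card T' < n \<Longrightarrow> gen T' = G \<Longrightarrow>
               \<exists>B. finite B \<and> B \<subseteq> G \<and> gen B = G \<and> indep B"
  shows "finite T \<Longrightarrow> card T = n \<Longrightarrow> gen T = G \<Longrightarrow> (\<Sum>t\<in>T. zsmul (c t) t) = 0
     \<Longrightarrow> (\<exists>t\<in>T. c t \<noteq> 0) \<Longrightarrow> \<exists>B. finite B \<and> B \<subseteq> G \<and> gen B = G \<and> indep B"
proof (induction "\<Sum>t\<in>T. nat \<bar>c t\<bar>" arbitrary: T c rule: less_induct)
  case less
  note fin = less.prems(1) and cardT = less.prems(2) and genT = less.prems(3) and rel = less.prems(4)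
  have remove: "\<exists>B. finite B \<and> B \<subseteq> G \<and> gen B = G \<and> indep B"
    if "x \<in> T" "x \<in> gen (T - {x})" for x
  proof -
    have "card (T - {x}) < n" using card_Diff1_less[OF fin that(1)] cardT by simp
    moreover have "gen (T - {x}) = G" using gen_remove[OF that] genT by simp
    ultimately show ?thesis using IH fin by blast
  qed
  obtain t0 where t0: "t0 \<in> T" "c t0 \<noteq> 0" using less.prems(5) by blast
  show ?case
  proof (cases "\<forall>t\<in>T-{t0}. c t = 0")
    case True
    have "(\<Sum>t\<in>T. zsmul (c t) t) = zsmul (c t0) t0 + (\<Sum>t\<in>T-{t0}. zsmul (c t) t)"
      using fin t0 by (simp add: sum.remove)
    also have "(\<Sum>t\<in>T-{t0}. zsmul (c t) t) = 0" using True by (intro sum.neutral) simp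
    finally have "zsmul (c t0) t0 = 0" using rel by simp
    then have "t0 = 0" using zsmul_torsion[OF tf] t0 by blast
    then have "t0 \<in> gen (T - {t0})" using gen_subgroup[of "T - {t0}"] unfolding subgroup_add_def by simp
    then show ?thesis using remove t0 by blast
  next
    case False
    then obtain t1 where t1: "t1 \<in> T" "t1 \<noteq> t0" "c t1 \<noteq> 0" by blast
    obtain a b where ab: "a \<in> T" "b \<in> T" "a \<noteq> b" "c a \<noteq> 0" "c b \<noteq> 0" "\<bar>c b\<bar> \<le> \<bar>c a\<bar>"
    proof (cases "\<bar>c t1\<bar> \<le> \<bar>c t0\<bar>")
      case True then show ?thesis using that[of t0 t1] t0 t1 by auto
    next
      case False then show ?thesis using that[of t1 t0] t0 t1 by auto
    qed
    define e where "e = sgn (c a) * sgn (c b)"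
    have e0: "e \<noteq> 0" using ab unfolding e_def by (simp add: sgn_if)
    have eabs: "\<bar>c a - e * c b\<bar> = \<bar>c a\<bar> - \<bar>c b\<bar>"
      using ab unfolding e_def by (auto simp: sgn_if abs_if)
    define b' where "b' = b + zsmul e a"
    have bb': "b = b' - zsmul e a" unfolding b'_def by simp
    show ?thesis
    proof (cases "b' \<in> T - {b}")
      case True
      have g1: "b' \<in> gen (T - {b})" using True gen_sub[of "T - {b}"] by blast
      have g2: "a \<in> gen (T - {b})" using ab gen_sub[of "T - {b}"] by blast
      have "b' - zsmul e a \<in> gen (T - {b})"
        by (rule sub_diff[OF gen_subgroup g1 sub_zsmul[OF gen_subgroup g2]])
      then have "b \<in> gen (T - {b})" using bb' by simp
      then show ?thesis using remove ab by blast
    next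
      case b'T: False
      show ?thesis
      proof (cases "b' = b")
        case True
        then have "zsmul e a = 0" unfolding b'_def by simp
        then have "a = 0" using zsmul_torsion[OF tf] e0 by blast
        then have "a \<in> gen (T - {a})" using gen_subgroup[of "T - {a}"] unfolding subgroup_add_def by simp
        then show ?thesis using remove ab by blast
      next
        case False
        with b'T have b'T: "b' \<notin> T" by blast
        define c'' where "c'' = (c(a := c a - e * c b))(b' := c b)"
        define T'' where "T'' = insert b' (T - {b})"
        have s1: "(\<Sum>t\<in>T''. zsmul (c'' t) t) = 0"
          and s2: "(\<Sum>t\<in>T''. nat \<bar>c'' t\<bar>) = nat \<bar>c b\<bar> + nat \<bar>c a - e * c b\<bar> + (\<Sum>t\<in>T-{a,b}. nat \<bar>c t\<bar>)"
          unfolding c''_def T''_def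
          by (rule step_sum(1)[OF fin ab(1,2,3) b'T b'_def rel], rule step_sum(2)[OF fin ab(1,2,3) b'T b'_def rel])
        have s3: "(\<Sum>t\<in>T. nat \<bar>c t\<bar>) = nat \<bar>c a\<bar> + nat \<bar>c b\<bar> + (\<Sum>t\<in>T-{a,b}. nat \<bar>c t\<bar>)"
          using sum_split2[OF fin ab(1,2,3)] .
        have lt: "(\<Sum>t\<in>T''. nat \<bar>c'' t\<bar>) < (\<Sum>t\<in>T. nat \<bar>c t\<bar>)"
          unfolding s2 s3 eabs using ab by auto
        have finT'': "finite T''" using fin unfolding T''_def by simp
        have "card (T - {b}) = card T - 1" using fin ab(2) by simp
        moreover have "card T > 0" using fin ab(2) card_gt_0_iff by blast
        ultimately have cardT'': "card T'' = n" unfolding T''_def using fin b'T cardT by simp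
        have sa: "a \<in> T''" "b' \<in> T''" using ab unfolding T''_def by auto
        have genT'': "gen T'' = G"
        proof -
          have "gen T'' = gen T"
          proof (rule gen_eqI)
            show "T'' \<subseteq> gen T"
            proof
              fix t assume "t \<in> T''"
              then consider "t = b'" | "t \<in> T" unfolding T''_def by blast
              then show "t \<in> gen T"
              proof cases
                case 1
                have g1: "b \<in> gen T" "a \<in> gen T" using ab gen_sub[of T] by blast+
                show ?thesis unfolding 1 b'_def
                  by (rule sub_add[OF gen_subgroup g1(1) sub_zsmul[OF gen_subgroup g1(2)]])
              next
                case 2 then show ?thesis using gen_sub[of T] by blast
              qed
            qed
            show "T \<subseteq> gen T''"
            proof
              fix t assume "t \<in> T"
              show "t \<in> gen T''"
              proof (cases "t = b")
                case True
                have g1: "b' \<in> gen T''" "a \<in> gen T''" using sa gen_sub[of "T''"] by blast+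
                show ?thesis unfolding True bb'
                  by (rule sub_diff[OF gen_subgroup g1(1) sub_zsmul[OF gen_subgroup g1(2)]])
              next
                case False then show ?thesis using \<open>t \<in> T\<close> gen_sub[of T''] unfolding T''_def by blast
              qed
            qed
          qed
          then show ?thesis using genT by simp
        qed
        have nz: "\<exists>t\<in>T''. c'' t \<noteq> 0" using sa ab unfolding c''_def by auto
        show ?thesis using less.hyps[OF lt finT'' cardT'' genT'' s1 nz] .
      qed
    qed
  qed
qed

lemma tf_free:
  fixes T :: "'a::ab_group_add set"
  assumes tf: "torsion_free TYPE('a)"
  shows "finite T \<Longrightarrow> \<exists>B. finite B \<and> B \<subseteq> gen T \<and> gen B = gen T \<and> indep B"
proof (induction "card T" arbitrary: T rule: less_induct)
  case less
  show ?case
  proof (cases "indep T")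
    case True then show ?thesis using less.prems gen_sub[of T] by blast
  next
    case False
    then obtain c where rel: "(\<Sum>t\<in>T. zsmul (c t) t) = 0" and nz: "\<exists>t\<in>T. c t \<noteq> 0"
      unfolding indep_def by blast
    have IH: "\<And>T'. finite T' \<Longrightarrow> card T' < card T \<Longrightarrow> gen T' = gen T \<Longrightarrow>
               \<exists>B. finite B \<and> B \<subseteq> gen T \<and> gen B = gen T \<and> indep B"
    proof -
      fix T' :: "'a set" assume h: "finite T'" "card T' < card T" "gen T' = gen T"
      from less.hyps[OF h(2) h(1)] h(3)
      show "\<exists>B. finite B \<and> B \<subseteq> gen T \<and> gen B = gen T \<and> indep B" by simp
    qed
    show ?thesis using reduce[OF tf IH less.prems refl refl rel nz] .
  qed
qed


lemma part_a:
  assumes "pointed_reflection_subspace UNIV S" "T \<subseteq> S"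
  shows "pointed_reflection_subspace (gen T) (S \<inter> gen T)"
proof -
  have cl: "\<forall>x\<in>S. \<forall>y\<in>S. x - (y + y) \<in> S" and z: "0 \<in> S"
    using assms(1) unfolding pointed_reflection_subspace_def symmetric_reflection_subspace_def by auto
  have g: "gen (S \<inter> gen T) = gen T"
  proof (rule subset_antisym)
    show "gen (S \<inter> gen T) \<subseteq> gen T" by (rule gen_least[OF gen_subgroup]) blast
    show "gen T \<subseteq> gen (S \<inter> gen T)" using assms(2) gen_sub[of T] by (intro gen_mono) blast
  qed
  have "\<forall>x\<in>S \<inter> gen T. \<forall>y\<in>S \<inter> gen T. x - (y + y) \<in> S \<inter> gen T"
    using cl sub_diff[OF gen_subgroup[of T]] sub_add[OF gen_subgroup[of T]] by blast
  moreover have "0 \<in> gen T" using gen_subgroup[of T] unfolding subgroup_add_def by simp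
  ultimately show ?thesis using g z
    unfolding pointed_reflection_subspace_def symmetric_reflection_subspace_def by blast
qed

lemma part_b:
  assumes "pointed_reflection_subspace UNIV S"
  shows "direct_union S ((\<lambda>T. S \<inter> gen T) ` {T. finite T \<and> T \<subseteq> S})"
  unfolding direct_union_def directed_incl_def
proof (intro conjI)
  show "(\<lambda>T. S \<inter> gen T) ` {T. finite T \<and> T \<subseteq> S} \<noteq> {}" by blast
  show "\<forall>A\<in>(\<lambda>T. S \<inter> gen T) ` {T. finite T \<and> T \<subseteq> S}. \<forall>B\<in>(\<lambda>T. S \<inter> gen T) ` {T. finite T \<and> T \<subseteq> S}.
         \<exists>C\<in>(\<lambda>T. S \<inter> gen T) ` {T. finite T \<and> T \<subseteq> S}. A \<union> B \<subseteq> C"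
  proof (intro ballI)
    fix A B assume "A \<in> (\<lambda>T. S \<inter> gen T) ` {T. finite T \<and> T \<subseteq> S}" "B \<in> (\<lambda>T. S \<inter> gen T) ` {T. finite T \<and> T \<subseteq> S}"
    then obtain T1 T2 where t: "A = S \<inter> gen T1" "B = S \<inter> gen T2" "finite T1" "T1 \<subseteq> S" "finite T2" "T2 \<subseteq> S" by blast
    have "gen T1 \<subseteq> gen (T1 \<union> T2)" "gen T2 \<subseteq> gen (T1 \<union> T2)" by (simp_all add: gen_mono)
    then have "A \<union> B \<subseteq> S \<inter> gen (T1 \<union> T2)" using t by blast
    moreover have "S \<inter> gen (T1 \<union> T2) \<in> (\<lambda>T. S \<inter> gen T) ` {T. finite T \<and> T \<subseteq> S}" using t by blast
    ultimately show "\<exists>C\<in>(\<lambda>T. S \<inter> gen T) ` {T. finite T \<and> T \<subseteq> S}. A \<union> B \<subseteq> C" by blast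
  qed
  show "\<forall>A\<in>(\<lambda>T. S \<inter> gen T) ` {T. finite T \<and> T \<subseteq> S}. A \<subseteq> S" by blast
  show "S = \<Union> ((\<lambda>T. S \<inter> gen T) ` {T. finite T \<and> T \<subseteq> S})"
  proof
    show "S \<subseteq> \<Union> ((\<lambda>T. S \<inter> gen T) ` {T. finite T \<and> T \<subseteq> S})"
    proof
      fix x assume x: "x \<in> S"
      have "x \<in> gen {x}" using gen_sub[of "{x}"] by blast
      then have "x \<in> S \<inter> gen {x}" using x by blast
      moreover have "{x} \<in> {T. finite T \<and> T \<subseteq> S}" using x by simp
      ultimately show "x \<in> \<Union> ((\<lambda>T. S \<inter> gen T) ` {T. finite T \<and> T \<subseteq> S})" by blast
    qed
  qed blast
qed

lemma part_c:
  fixes SS :: "'a::ab_group_add set set"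
  assumes d: "directed_incl SS" and p: "\<forall>S'\<in>SS. pointed_reflection_subspace (gen S') S'"
    and u: "UNIV = (\<Union>S'\<in>SS. gen S')"
  shows "pointed_reflection_subspace UNIV (\<Union>SS)"
proof -
  have g: "gen (\<Union>SS) = UNIV"
  proof -
    have "\<And>x. x \<in> gen (\<Union>SS)"
    proof -
      fix x :: 'a
      obtain S' where "S' \<in> SS" "x \<in> gen S'" using u by blast
      moreover have "gen S' \<subseteq> gen (\<Union>SS)" using \<open>S' \<in> SS\<close> by (intro gen_mono) blast
      ultimately show "x \<in> gen (\<Union>SS)" by blast
    qed
    then show ?thesis by blast
  qed
  have cl: "\<forall>x\<in>\<Union>SS. \<forall>y\<in>\<Union>SS. x - (y + y) \<in> \<Union>SS"
  proof (intro ballI)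
    fix x y assume "x \<in> \<Union>SS" "y \<in> \<Union>SS"
    then obtain A B where ab: "A \<in> SS" "B \<in> SS" "x \<in> A" "y \<in> B" by blast
    then obtain C where c: "C \<in> SS" "A \<union> B \<subseteq> C" using d unfolding directed_incl_def by blast
    have "\<forall>x\<in>C. \<forall>y\<in>C. x - (y + y) \<in> C" using p c(1)
      unfolding pointed_reflection_subspace_def symmetric_reflection_subspace_def by blast
    then have "x - (y + y) \<in> C" using ab c by blast
    then show "x - (y + y) \<in> \<Union>SS" using c by blast
  qed
  obtain A where "A \<in> SS" using d unfolding directed_incl_def by blast
  then have "0 \<in> \<Union>SS" using p unfolding pointed_reflection_subspace_def by blast
  then show ?thesis using g cl
    unfolding pointed_reflection_subspace_def symmetric_reflection_subspace_def by blast
qed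

theorem lemma1p2:
  fixes S :: "'a::ab_group_add set"
  shows "(pointed_reflection_subspace UNIV S \<longrightarrow>
          (\<forall>T. T \<subseteq> S \<longrightarrow> pointed_reflection_subspace (gen T) (S \<inter> gen T))
        \<and> (\<forall>T. torsion_free TYPE('a) \<and> T \<subseteq> S \<and> finite T \<longrightarrow> semilattice_in (gen T) (S \<inter> gen T))
        \<and> direct_union S ((\<lambda>T. S \<inter> gen T) ` {T. finite T \<and> T \<subseteq> S}))
       \<and> (\<forall>\<S> :: 'a set set.
            directed_incl \<S> \<and> (\<forall>S'\<in>\<S>. pointed_reflection_subspace (gen S') S')
            \<and> UNIV = (\<Union>S'\<in>\<S>. gen S')
            \<longrightarrow> pointed_reflection_subspace UNIV (\<Union>\<S>))"
proof (intro conjI impI allI)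
  assume P: "pointed_reflection_subspace UNIV S"
  show "\<And>T. T \<subseteq> S \<Longrightarrow> pointed_reflection_subspace (gen T) (S \<inter> gen T)" using part_a[OF P] .
  show "direct_union S ((\<lambda>T. S \<inter> gen T) ` {T. finite T \<and> T \<subseteq> S})" using part_b[OF P] .
  fix T assume h: "torsion_free TYPE('a) \<and> T \<subseteq> S \<and> finite T"
  have "\<exists>B. finite B \<and> B \<subseteq> gen T \<and> gen B = gen T \<and> indep B"
    using h tf_free[of T] by simp
  then obtain B where "finite B \<and> B \<subseteq> gen T \<and> gen B = gen T \<and> indep B" by blast
  then have "free_abelian_finite_rank (gen T)"
    unfolding free_abelian_finite_rank_def indep_def by blast
  then show "semilattice_in (gen T) (S \<inter> gen T)"
    unfolding semilattice_in_def using part_a[OF P, of T] h by simp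
next
  fix SS :: "'a set set"
  assume "directed_incl SS \<and> (\<forall>S'\<in>SS. pointed_reflection_subspace (gen S') S') \<and> UNIV = (\<Union>S'\<in>SS. gen S')"
  then show "pointed_reflection_subspace UNIV (\<Union>SS)" using part_c[of SS] by simp
qed

end
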